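(* Let $\mathcal{G}$ be a simple temporal graph with $n>2$ vertices. Then, in the strict setting, $\mathcal{G}$ does not admit a temporal spanning tree.
   Context: A temporal graph is $\mathcal{G}=(V,E,\lambda)$ with $V$ a finite vertex set, $E$ a set of undirected edges, and $\lambda:E\to 2^{\mathbb{N}}$ assigning time labels to edges; $(V,E)$ is the footprint. It is simple if every edge has exactly one time label. In the strict setting, a temporal path is a sequence of pairs $(e_i,t_i)$ with $t_i\in\lambda(e_i)$, $\langle e_i\rangle$ a path in the footprint and $\langle t_i\rangle$ strictly increasing. A temporal subgraph keeps a subgraph of the footprint with labels restricted from $\lambda$. A temporal spanning tree of $\mathcal{G}$ is a temporal subgraph spanning all vertices whose footprint is a tree and in which there is a temporal path from every vertex to every other vertex. *)

theory Defs
  imports Main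
begin

definition temporal_graph :: "'v set \<Rightarrow> 'v set set \<Rightarrow> ('v set \<Rightarrow> nat set) \<Rightarrow> bool" where
  "temporal_graph V E lam \<longleftrightarrow> finite V \<and>
     (\<forall>e\<in>E. \<exists>u v. u \<noteq> v \<and> u \<in> V \<and> v \<in> V \<and> e = {u, v})"

definition simple_tg :: "'v set set \<Rightarrow> ('v set \<Rightarrow> nat set) \<Rightarrow> bool" where
  "simple_tg E lam \<longleftrightarrow> (\<forall>e\<in>E. card (lam e) = 1)"

definition is_path :: "'v set set \<Rightarrow> 'v list \<Rightarrow> bool" where
  "is_path E vs \<longleftrightarrow> vs \<noteq> [] \<and> distinct vs \<and>
     (\<forall>i. Suc i < length vs \<longrightarrow> {vs ! i, vs ! Suc i} \<in> E)"

definition strict_temporal_path ::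
  "'v set set \<Rightarrow> ('v set \<Rightarrow> nat set) \<Rightarrow> 'v \<Rightarrow> 'v \<Rightarrow> 'v list \<Rightarrow> nat list \<Rightarrow> bool" where
  "strict_temporal_path E lam u w vs ts \<longleftrightarrow>
     is_path E vs \<and> hd vs = u \<and> last vs = w \<and>
     length ts + 1 = length vs \<and>
     (\<forall>i < length ts. ts ! i \<in> lam {vs ! i, vs ! Suc i}) \<and>
     sorted_wrt (<) ts"

definition temporally_connected :: "'v set \<Rightarrow> 'v set set \<Rightarrow> ('v set \<Rightarrow> nat set) \<Rightarrow> bool" where
  "temporally_connected V E lam \<longleftrightarrow>
     (\<forall>u\<in>V. \<forall>w\<in>V. u \<noteq> w \<longrightarrow> (\<exists>vs ts. strict_temporal_path E lam u w vs ts))"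

definition connected_graph :: "'v set \<Rightarrow> 'v set set \<Rightarrow> bool" where
  "connected_graph V E \<longleftrightarrow>
     (\<forall>u\<in>V. \<forall>w\<in>V. \<exists>vs. is_path E vs \<and> hd vs = u \<and> last vs = w)"

definition has_cycle :: "'v set set \<Rightarrow> bool" where
  "has_cycle E \<longleftrightarrow> (\<exists>vs. is_path E vs \<and> length vs \<ge> 3 \<and> {last vs, hd vs} \<in> E)"

definition is_tree :: "'v set \<Rightarrow> 'v set set \<Rightarrow> bool" where
  "is_tree V E \<longleftrightarrow> connected_graph V E \<and> \<not> has_cycle E"

definition temporal_spanning_tree ::
  "'v set \<Rightarrow> 'v set set \<Rightarrow> ('v set \<Rightarrow> nat set) \<Rightarrow> 'v set set \<Rightarrow> bool" where
  "temporal_spanning_tree V E lam E' \<longleftrightarrow>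
     E' \<subseteq> E \<and> is_tree V E' \<and> temporally_connected V E' lam"

end

theory Submission
  imports Defs
begin

lemma three: "2 < card (V::'a set) \<Longrightarrow> \<exists>x y z. x \<in> V \<and> y \<in> V \<and> z \<in> V \<and> x \<noteq> y \<and> x \<noteq> z \<and> y \<noteq> z"
proof -
  assume "2 < card V"
  then have "Suc (Suc (Suc 0)) \<le> card V" by simp
  then show ?thesis unfolding card_le_Suc_iff by fastforce
qed

lemma path_take:
  assumes "is_path E vs" "0 < n"
  shows "is_path E (take n vs)"
  using assms unfolding is_path_def by auto

lemma path_drop:
  assumes "is_path E vs" "n < length vs"
  shows "is_path E (drop n vs)"
  using assms unfolding is_path_def by (auto simp: distinct_drop)

lemma path_cons:
  assumes "is_path E vs" "b \<notin> set vs" "{b, hd vs} \<in> E"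
  shows "is_path E (b # vs)"
  using assms unfolding is_path_def
  by (auto simp: nth_Cons hd_conv_nth split: nat.splits)

lemma forced:
  assumes nc: "\<not> has_cycle E"
    and ab: "{a,b} \<in> E" and bc: "{b,c} \<in> E"
    and d: "a \<noteq> b" "b \<noteq> c" "a \<noteq> c"
    and p: "is_path E vs" "hd vs = a" "last vs = c"
  shows "vs = [a,b,c]"
proof -
  have ne: "vs \<noteq> []" using p unfolding is_path_def by auto
  have l2: "length vs \<ge> 2"
  proof (rule ccontr)
    assume "\<not> ?thesis"
    then have "length vs = 1" using ne by (metis One_nat_def Suc_leI le_less length_greater_0_conv numeral_2_eq_2 not_less_eq_eq)
    then have "hd vs = last vs" by (cases vs) auto
    then show False using p d by simp
  qed
  have bin: "b \<in> set vs"
  proof (rule ccontr)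
    assume nb: "b \<notin> set vs"
    have "is_path E (b # vs)" using path_cons[OF p(1) nb] ab p(2)
      by (simp add: insert_commute)
    moreover have "length (b # vs) \<ge> 3" using l2 by simp
    moreover have "{last (b # vs), hd (b # vs)} \<in> E" using ne p(3) bc
      by (simp add: insert_commute)
    ultimately show False using nc unfolding has_cycle_def by blast
  qed
  then obtain k where k: "k < length vs" "vs ! k = b" by (auto simp: in_set_conv_nth)
  have v0: "vs ! 0 = a" using p(2) ne by (simp add: hd_conv_nth)
  have vl: "vs ! (length vs - 1) = c" using p(3) ne by (simp add: last_conv_nth)
  have k0: "k \<noteq> 0" using k v0 d by metis
  have k1: "k = 1"
  proof (rule ccontr)
    assume "k \<noteq> 1"
    then have k2: "k \<ge> 2" using k0 by simp
    have "is_path E (take (Suc k) vs)" using path_take[OF p(1)] by simp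
    moreover have "length (take (Suc k) vs) \<ge> 3" using k k2 by simp
    moreover have "last (take (Suc k) vs) = b" using k
      by (simp add: take_Suc_conv_app_nth)
    moreover have "hd (take (Suc k) vs) = a" using v0 ne by (simp add: hd_conv_nth)
    ultimately show False using nc ab unfolding has_cycle_def
      by (metis insert_commute)
  qed
  have l3: "length vs \<ge> 3"
  proof (rule ccontr)
    assume "\<not> ?thesis"
    then have "length vs = 2" using l2 by simp
    then show False using vl k k1 d by simp
  qed
  have l3': "length vs = 3"
  proof (rule ccontr)
    assume "\<not> ?thesis"
    then have l4: "length vs \<ge> 4" using l3 by simp
    have "is_path E (drop 1 vs)" using path_drop[OF p(1)] l4 by simp
    moreover have "length (drop 1 vs) \<ge> 3" using l4 by simp
    moreover have "last (drop 1 vs) = c" using p(3) l4 by simp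
    moreover have "hd (drop 1 vs) = b" using k k1 l4 by (simp add: hd_drop_conv_nth)
    ultimately show False using nc bc unfolding has_cycle_def
      by (metis insert_commute)
  qed
  obtain x y z where "vs = [x,y,z]" using l3'
    by (auto simp: length_Suc_conv numeral_3_eq_3)
  then show ?thesis using v0 vl k k1 l3' by simp
qed

theorem lemma1:
  fixes V :: "'v set" and E :: "'v set set" and lam :: "'v set \<Rightarrow> nat set"
  assumes "temporal_graph V E lam"
    and "simple_tg E lam"
    and "card V > 2"
  shows "\<not> (\<exists>E'. temporal_spanning_tree V E lam E')"
proof
  assume "\<exists>E'. temporal_spanning_tree V E lam E'"
  then obtain E' where sub: "E' \<subseteq> E" and conn: "connected_graph V E'"
    and nc: "\<not> has_cycle E'" and tc: "temporally_connected V E' lam"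
    unfolding temporal_spanning_tree_def is_tree_def by blast
  have edgeV: "\<And>x y. {x,y} \<in> E' \<Longrightarrow> x \<in> V \<and> y \<in> V \<and> x \<noteq> y"
  proof -
    fix x y assume "{x,y} \<in> E'"
    then have "{x,y} \<in> E" using sub by blast
    then obtain u v where "u \<noteq> v" "u \<in> V" "v \<in> V" "{x,y} = {u,v}"
      using assms(1) unfolding temporal_graph_def by blast
    then show "x \<in> V \<and> y \<in> V \<and> x \<noteq> y" by (auto simp: doubleton_eq_iff)
  qed
  have "\<exists>a b c. {a,b} \<in> E' \<and> {b,c} \<in> E' \<and> a \<noteq> c"
  proof -
    obtain x y z where xyz: "x \<in> V" "y \<in> V" "z \<in> V" "x \<noteq> y" "x \<noteq> z" "y \<noteq> z"
      using three[OF assms(3)] by blast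
    have gen: "\<And>u w. u \<in> V \<Longrightarrow> w \<in> V \<Longrightarrow> u \<noteq> w \<Longrightarrow>
        (\<exists>a b c. {a,b} \<in> E' \<and> {b,c} \<in> E' \<and> a \<noteq> c) \<or> {u,w} \<in> E'"
    proof -
      fix u w assume uw: "u \<in> V" "w \<in> V" "u \<noteq> w"
      then obtain vs where vs: "is_path E' vs" "hd vs = u" "last vs = w"
        using conn unfolding connected_graph_def by blast
      have ne: "vs \<noteq> []" using vs unfolding is_path_def by auto
      have l2: "length vs \<ge> 2"
      proof (rule ccontr)
        assume "\<not> ?thesis"
        then have "length vs = 1" using ne by (metis One_nat_def Suc_leI le_less length_greater_0_conv numeral_2_eq_2 not_less_eq_eq)
        then have "hd vs = last vs" by (cases vs) auto
        then show False using vs uw by simp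
      qed
      show "(\<exists>a b c. {a,b} \<in> E' \<and> {b,c} \<in> E' \<and> a \<noteq> c) \<or> {u,w} \<in> E'"
      proof (cases "length vs = 2")
        case True
        then have "vs ! 0 = u" "vs ! 1 = w" using vs ne
          by (auto simp: hd_conv_nth last_conv_nth)
        then show ?thesis using vs(1) True unfolding is_path_def by force
      next
        case False
        then have "length vs \<ge> 3" using l2 by simp
        moreover have "\<forall>i. Suc i < length vs \<longrightarrow> {vs ! i, vs ! Suc i} \<in> E'" "distinct vs"
          using vs(1) unfolding is_path_def by auto
        ultimately have "{vs!0, vs!Suc 0} \<in> E'" "{vs!Suc 0, vs!Suc (Suc 0)} \<in> E'"
          by auto
        moreover have "vs!0 \<noteq> vs!Suc (Suc 0)"
        proof
          assume "vs!0 = vs!Suc (Suc 0)"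
          then have "(0::nat) = Suc (Suc 0)"
            using nth_eq_iff_index_eq[of vs 0 "Suc (Suc 0)"] \<open>distinct vs\<close> \<open>length vs \<ge> 3\<close>
            by linarith
          then show False by simp
        qed
        ultimately show ?thesis by blast
      qed
    qed
    show ?thesis
      using gen[OF xyz(1,2,4)] gen[OF xyz(1,3,5)] xyz(6)
      by (metis insert_commute)
  qed
  then obtain a b c where ab: "{a,b} \<in> E'" and bc: "{b,c} \<in> E'" and ac: "a \<noteq> c" by blast
  have V: "a \<in> V" "b \<in> V" "c \<in> V" "a \<noteq> b" "b \<noteq> c" using edgeV ab bc by auto
  obtain vs ts where P1: "strict_temporal_path E' lam a c vs ts"
    using tc V ac unfolding temporally_connected_def by blast
  obtain ws us where P2: "strict_temporal_path E' lam c a ws us"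
    using tc V ac[symmetric] unfolding temporally_connected_def by blast
  have vs: "vs = [a,b,c]" using forced[OF nc ab bc V(4,5) ac] P1
    unfolding strict_temporal_path_def by blast
  have ws: "ws = [c,b,a]" using forced[OF nc, of c b a] bc ab V ac P2
    unfolding strict_temporal_path_def by (metis insert_commute)
  have lt: "length ts = 2" "length us = 2" using P1 P2 vs ws
    unfolding strict_temporal_path_def by auto
  have P1a: "\<forall>i<2. ts ! i \<in> lam {vs ! i, vs ! Suc i}" "sorted_wrt (<) ts"
    using P1 lt unfolding strict_temporal_path_def by auto
  have P2a: "\<forall>i<2. us ! i \<in> lam {ws ! i, ws ! Suc i}" "sorted_wrt (<) us"
    using P2 lt unfolding strict_temporal_path_def by auto
  have t: "ts!0 \<in> lam {a,b}" "ts!1 \<in> lam {b,c}" "ts!0 < ts!1"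
    using P1a(1)[rule_format, of 0] P1a(1)[rule_format, of 1] P1a(2) vs lt
    by (auto simp: sorted_wrt_iff_nth_less)
  have u: "us!0 \<in> lam {b,c}" "us!1 \<in> lam {a,b}" "us!0 < us!1"
    using P2a(1)[rule_format, of 0] P2a(1)[rule_format, of 1] P2a(2) ws lt
    by (auto simp: sorted_wrt_iff_nth_less insert_commute)
  have c1: "card (lam {a,b}) = 1" "card (lam {b,c}) = 1"
    using assms(2) sub ab bc unfolding simple_tg_def by auto
  have "ts!0 = us!1" using c1(1) t(1) u(2) by (metis card_1_singletonE singletonD)
  moreover have "ts!1 = us!0" using c1(2) t(2) u(1) by (metis card_1_singletonE singletonD)
  ultimately show False using t(3) u(3) by simp
qed

end
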